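(* Let $(E,\|\cdot\|_E)$ be a quasi-normed symmetric sequence space with $E\subseteq c_0$ (and whose dual $E^*$ separates the points of $E$). Then $(E,\|\cdot\|_{\widehat{E}})$ is a normed symmetric sequence space; that is, $\|\cdot\|_{\widehat E}$ is a norm on $E$ and whenever $f\in L_0(\mathbb{N})$, $g\in E$ and $\mu(f)\le\mu(g)$, then $f\in E$ and $\|f\|_{\widehat{E}}\le\|g\|_{\widehat{E}}$.
   Context: A quasi-norm on a complex vector space $X$ is a map $\|\cdot\|_X:X\to\mathbb R$ with $\|x\|_X>0$ for $x\ne0$, $\|\alpha x\|_X=|\alpha|\|x\|_X$, and $\|x+y\|_X\le C(\|x\|_X+\|y\|_X)$ for some constant $C$. The envelope seminorm is $\|x\|_{\widehat{X}}=\inf\{\sum_{i=1}^n\|x_i\|_X: x=\sum_{i=1}^n x_i,\ x_i\in X,\ n\in\mathbb N\}$ (equivalently the Minkowski functional of the convex hull of the unit ball of $X$); it is a norm when $X^*$ separates points, and the Banach envelope $\widehat X$ is the completion of $(X,\|\cdot\|_{\widehat X})$. $L_0(\mathbb N)$ is the space of complex sequences with counting measure $m$; the decreasing rearrangement is $\mu(t,f)=\inf\{s\ge 0: m\{k:|f(k)|>s\}\le t\}$, identified with the sequence $(\mu(n-1,f))_{n\ge1}$. A quasi-normed symmetric sequence space is a quasi-normed space $E\subseteq L_0(\mathbb N)$ such that whenever $f\in L_0(\mathbb N)$, $g\in E$ and $\mu(f)\le\mu(g)$, then $f\in E$ and $\|f\|_E\le\|g\|_E$. *)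

theory Defs
  imports "HOL-Analysis.Analysis" "HOL-Library.Extended_Real" "HOL-Library.Function_Algebras"
begin

text \<open>Sequences in L_0(N) are functions nat => complex (counting measure on N).\<close>

text \<open>Decreasing rearrangement mu(t,f) = inf{s >= 0 : m{k : |f k| > s} <= t}, evaluated at
  integer t = n (the sequence (mu(n-1,f))_{n>=1}, shifted to start at index 0).
  Values are extended reals: the infimum of the empty set is +infinity.
  A set of infinite counting measure is never <= t.\<close>
definition decr_rearr :: "(nat \<Rightarrow> complex) \<Rightarrow> nat \<Rightarrow> ereal" where
  "decr_rearr f n = Inf {ereal s | s. s \<ge> 0 \<and> finite {k. norm (f k) > s}
                                      \<and> card {k. norm (f k) > s} \<le> n}"

definition complex_subspace :: "(nat \<Rightarrow> complex) set \<Rightarrow> bool" where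
  "complex_subspace E \<longleftrightarrow> 0 \<in> E \<and> (\<forall>x\<in>E. \<forall>y\<in>E. x + y \<in> E)
      \<and> (\<forall>a::complex. \<forall>x\<in>E. (\<lambda>k. a * x k) \<in> E)"

definition is_quasinorm :: "(nat \<Rightarrow> complex) set \<Rightarrow> ((nat \<Rightarrow> complex) \<Rightarrow> real) \<Rightarrow> bool" where
  "is_quasinorm E N \<longleftrightarrow> complex_subspace E
      \<and> (\<forall>x\<in>E. x \<noteq> 0 \<longrightarrow> N x > 0)
      \<and> (\<forall>a::complex. \<forall>x\<in>E. N (\<lambda>k. a * x k) = norm a * N x)
      \<and> (\<exists>C. \<forall>x\<in>E. \<forall>y\<in>E. N (x + y) \<le> C * (N x + N y))"

definition is_norm_on :: "(nat \<Rightarrow> complex) set \<Rightarrow> ((nat \<Rightarrow> complex) \<Rightarrow> real) \<Rightarrow> bool" where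
  "is_norm_on E N \<longleftrightarrow> complex_subspace E
      \<and> (\<forall>x\<in>E. x \<noteq> 0 \<longrightarrow> N x > 0)
      \<and> (\<forall>a::complex. \<forall>x\<in>E. N (\<lambda>k. a * x k) = norm a * N x)
      \<and> (\<forall>x\<in>E. \<forall>y\<in>E. N (x + y) \<le> N x + N y)"

definition is_symmetric :: "(nat \<Rightarrow> complex) set \<Rightarrow> ((nat \<Rightarrow> complex) \<Rightarrow> real) \<Rightarrow> bool" where
  "is_symmetric E N \<longleftrightarrow> (\<forall>f g. g \<in> E \<and> (\<forall>n. decr_rearr f n \<le> decr_rearr g n)
                           \<longrightarrow> f \<in> E \<and> N f \<le> N g)"

definition dual_functional :: "(nat \<Rightarrow> complex) set \<Rightarrow> ((nat \<Rightarrow> complex) \<Rightarrow> real)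
     \<Rightarrow> ((nat \<Rightarrow> complex) \<Rightarrow> complex) \<Rightarrow> bool" where
  "dual_functional E N \<phi> \<longleftrightarrow>
      (\<forall>x\<in>E. \<forall>y\<in>E. \<phi> (x + y) = \<phi> x + \<phi> y)
    \<and> (\<forall>a::complex. \<forall>x\<in>E. \<phi> (\<lambda>k. a * x k) = a * \<phi> x)
    \<and> (\<exists>C. \<forall>x\<in>E. norm (\<phi> x) \<le> C * N x)"

definition dual_separates :: "(nat \<Rightarrow> complex) set \<Rightarrow> ((nat \<Rightarrow> complex) \<Rightarrow> real) \<Rightarrow> bool" where
  "dual_separates E N \<longleftrightarrow> (\<forall>x\<in>E. x \<noteq> 0 \<longrightarrow> (\<exists>\<phi>. dual_functional E N \<phi> \<and> \<phi> x \<noteq> 0))"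

definition envelope_norm :: "(nat \<Rightarrow> complex) set \<Rightarrow> ((nat \<Rightarrow> complex) \<Rightarrow> real)
     \<Rightarrow> (nat \<Rightarrow> complex) \<Rightarrow> real" where
  "envelope_norm E N x = Inf {(\<Sum>i<n. N (xs i)) | n xs.
       (n::nat) \<ge> 1 \<and> (\<forall>i<n. xs i \<in> E) \<and> x = (\<Sum>i<n. xs i)}"

end

theory Submission
  imports Defs
begin

definition prec :: "(nat \<Rightarrow> complex) \<Rightarrow> nat \<Rightarrow> nat \<Rightarrow> bool" where
  "prec f j k \<longleftrightarrow> norm (f j) > norm (f k) \<or> (norm (f j) = norm (f k) \<and> j < k)"
definition rk :: "(nat \<Rightarrow> complex) \<Rightarrow> nat \<Rightarrow> nat" where
  "rk f k = card {j. prec f j k}"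
definition GG :: "(nat \<Rightarrow> complex) \<Rightarrow> real \<Rightarrow> nat set" where
  "GG f s = {j. norm (f j) \<ge> s}"

lemma fin_G: assumes "f \<longlonglongrightarrow> 0" "s > 0" shows "finite (GG f s)"
proof -
  obtain no where "\<forall>n\<ge>no. norm (f n) < s" using assms unfolding LIMSEQ_iff by fastforce
  hence "GG f s \<subseteq> {..<no}" unfolding GG_def by (auto simp: not_less[symmetric])
  thus ?thesis using finite_subset by blast
qed

lemma D_sub: "f k \<noteq> 0 \<Longrightarrow> {j. prec f j k} \<subseteq> GG f (norm (f k)) - {k}"
  unfolding prec_def GG_def by auto

lemma fin_D: "f \<longlonglongrightarrow> 0 \<Longrightarrow> f k \<noteq> 0 \<Longrightarrow> finite {j. prec f j k}"
  using D_sub fin_G finite_subset by (metis Diff_subset zero_less_norm_iff subset_trans)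

lemma rk_inj: assumes "f \<longlonglongrightarrow> 0" "f k \<noteq> 0" "f k' \<noteq> 0" "rk f k = rk f k'" shows "k = k'"
proof (rule ccontr)
  assume ne: "k \<noteq> k'"
  have trans: "prec f a b \<Longrightarrow> prec f b c \<Longrightarrow> prec f a c" for a b c
    unfolding prec_def by auto
  have lt: "rk f a < rk f b" if "prec f a b" "f a \<noteq> 0" "f b \<noteq> 0" for a b
  proof -
    have "{j. prec f j a} \<subset> {j. prec f j b}"
      using that trans by (auto simp: prec_def)
    thus ?thesis unfolding rk_def using psubset_card_mono fin_D[OF assms(1) that(3)] by blast
  qed
  have "prec f k k' \<or> prec f k' k" using ne unfolding prec_def by auto
  thus False using lt assms by fastforce
qed

lemma rk_lt: assumes "f \<longlonglongrightarrow> 0" "s > 0" "k \<in> GG f s" shows "rk f k < card (GG f s)"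
proof -
  have "{j. prec f j k} \<subset> GG f s" using assms(3) unfolding prec_def GG_def by auto
  thus ?thesis unfolding rk_def using psubset_card_mono fin_G[OF assms(1,2)] by blast
qed

lemma rk_onto: assumes "f \<longlonglongrightarrow> 0" "s > 0" "r < card (GG f s)" shows "\<exists>j\<in>GG f s. rk f j = r"
proof -
  have nz: "j \<in> GG f s \<Longrightarrow> f j \<noteq> 0" for j using assms(2) unfolding GG_def by auto
  have inj: "inj_on (rk f) (GG f s)" using rk_inj[OF assms(1)] nz by (meson inj_onI)
  have sub: "rk f ` GG f s \<subseteq> {..<card (GG f s)}" using rk_lt[OF assms(1,2)] by auto
  have "card (rk f ` GG f s) = card {..<card (GG f s)}" using card_image[OF inj] by simp
  hence "rk f ` GG f s = {..<card (GG f s)}" using card_subset_eq[OF _ sub] by simp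
  hence "r \<in> rk f ` GG f s" using assms(3) by simp
  thus ?thesis by (simp only: image_iff) metis
qed

lemma count_le:
  assumes f0: "f \<longlonglongrightarrow> 0" and g0: "g \<longlonglongrightarrow> 0" and s: "s > 0"
    and mu: "\<forall>n. decr_rearr f n \<le> decr_rearr g n"
  shows "card (GG f s) \<le> card (GG g s)"
proof (rule ccontr)
  assume nt: "\<not> ?thesis"
  define n where "n = card (GG g s)"
  have nlt: "n < card (GG f s)" using nt n_def by simp
  have a: "ereal s \<le> decr_rearr f n"
    unfolding decr_rearr_def
  proof (rule Inf_greatest, clarify)
    fix s' assume h: "0 \<le> s'" "finite {k. s' < norm (f k)}" "card {k. s' < norm (f k)} \<le> n"
    show "ereal s \<le> ereal s'"
    proof (rule ccontr)
      assume "\<not> ereal s \<le> ereal s'"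
      hence "s' < s" by simp
      hence "GG f s \<subseteq> {k. s' < norm (f k)}" unfolding GG_def by auto
      hence "card (GG f s) \<le> n" using h card_mono order_trans by blast
      thus False using nlt by simp
    qed
  qed
  define F where "F = {j. s/2 < norm (g j)}"
  have finF: "finite F"
  proof -
    have "F \<subseteq> GG g (s/2)" unfolding F_def GG_def by auto
    thus ?thesis using fin_G[OF g0, of "s/2"] s finite_subset by auto
  qed
  define V where "V = (\<lambda>j. norm (g j)) ` F \<inter> {..<s}"
  define s' where "s' = Max (insert (s/2) V)"
  have finV: "finite V" using finF V_def by simp
  have s'lt: "s' < s" unfolding s'_def using finV s by (simp add: V_def)
  have s'ge: "s/2 \<le> s'" unfolding s'_def using finV Max_ge by blast
  have sub: "{k. s' < norm (g k)} \<subseteq> GG g s"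
  proof
    fix k assume "k \<in> {k. s' < norm (g k)}"
    hence k: "s' < norm (g k)" by simp
    hence "k \<in> F" using s'ge unfolding F_def by simp
    show "k \<in> GG g s"
    proof (rule ccontr)
      assume "k \<notin> GG g s"
      hence "norm (g k) \<in> V" using \<open>k \<in> F\<close> unfolding V_def GG_def by auto
      hence "norm (g k) \<le> s'" unfolding s'_def using finV by simp
      thus False using k by simp
    qed
  qed
  have finG: "finite (GG g s)" using fin_G[OF g0 s] .
  have "ereal s' \<in> {ereal s |s. 0 \<le> s \<and> finite {k. s < norm (g k)} \<and> card {k. s < norm (g k)} \<le> n}"
    using sub finG s'ge s n_def by (auto intro: finite_subset card_mono)
  hence "decr_rearr g n \<le> ereal s'" unfolding decr_rearr_def by (rule Inf_lower)
  hence "decr_rearr g n < ereal s" proof -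
    have "ereal s' < ereal s" using s'lt by simp
    thus ?thesis using \<open>decr_rearr g n \<le> ereal s'\<close> by (rule le_less_trans[rotated])
  qed
  thus False using a mu by (meson leD order_trans)
qed

lemma matching:
  assumes f0: "f \<longlonglongrightarrow> 0" and g0: "g \<longlonglongrightarrow> 0"
    and mu: "\<forall>n. decr_rearr f n \<le> decr_rearr g n"
  shows "\<exists>\<pi>. inj_on \<pi> {k. f k \<noteq> 0} \<and> (\<forall>k. f k \<noteq> 0 \<longrightarrow> norm (f k) \<le> norm (g (\<pi> k)))"
proof -
  define \<pi> where "\<pi> k = (SOME j. j \<in> GG g (norm (f k)) \<and> rk g j = rk f k)" for k
  have P: "\<pi> k \<in> GG g (norm (f k)) \<and> rk g (\<pi> k) = rk f k" if "f k \<noteq> 0" for k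
  proof -
    let ?s = "norm (f k)"
    have s: "?s > 0" using that by simp
    have "rk f k < card (GG f ?s)" by (rule rk_lt[OF f0 s]) (simp add: GG_def)
    also have "\<dots> \<le> card (GG g ?s)" by (rule count_le[OF f0 g0 s mu])
    finally obtain j where "j \<in> GG g ?s" "rk g j = rk f k" using rk_onto[OF g0 s] by blast
    hence "j \<in> GG g ?s \<and> rk g j = rk f k" by blast
    thus ?thesis unfolding \<pi>_def by (rule someI)
  qed
  have "inj_on \<pi> {k. f k \<noteq> 0}"
  proof (rule inj_onI)
    fix k k' assume "k \<in> {k. f k \<noteq> 0}" "k' \<in> {k. f k \<noteq> 0}" "\<pi> k = \<pi> k'"
    hence "f k \<noteq> 0" "f k' \<noteq> 0" "\<pi> k = \<pi> k'" by auto
    moreover have "rk f k = rk f k'" using P[OF \<open>f k \<noteq> 0\<close>] P[OF \<open>f k' \<noteq> 0\<close>] \<open>\<pi> k = \<pi> k'\<close> by simp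
    ultimately show "k = k'" using rk_inj[OF f0] by blast
  qed
  moreover have "\<forall>k. f k \<noteq> 0 \<longrightarrow> norm (f k) \<le> norm (g (\<pi> k))"
  proof (intro allI impI)
    fix k assume "f k \<noteq> 0"
    from conjunct1[OF P[OF this]] show "norm (f k) \<le> norm (g (\<pi> k))" unfolding GG_def by simp
  qed
  ultimately show ?thesis by blast
qed

lemma rearr_mono:
  assumes inj: "inj_on \<pi> {k. f k \<noteq> 0}"
    and dom: "\<forall>k. h k \<noteq> 0 \<longrightarrow> f k \<noteq> 0 \<and> norm (h k) \<le> norm (u (\<pi> k))"
  shows "decr_rearr h n \<le> decr_rearr u n"
  unfolding decr_rearr_def
proof (rule Inf_superset_mono, clarify)
  fix s assume s: "0 \<le> s" "finite {k. s < norm (u k)}" "card {k. s < norm (u k)} \<le> n"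
  let ?B = "{k. s < norm (h k)}"
  have B1: "?B \<subseteq> {k. f k \<noteq> 0}" using dom s(1) by force
  have injB: "inj_on \<pi> ?B" using inj B1 inj_on_subset by blast
  have img: "\<pi> ` ?B \<subseteq> {k. s < norm (u k)}"
  proof
    fix x assume "x \<in> \<pi> ` ?B"
    then obtain k where "x = \<pi> k" "s < norm (h k)" by blast
    moreover have "h k \<noteq> 0" using \<open>s < norm (h k)\<close> s(1) by auto
    ultimately show "x \<in> {k. s < norm (u k)}" using dom by force
  qed
  have fB: "finite ?B" using finite_imageD[OF finite_subset[OF img s(2)] injB] .
  have "card ?B = card (\<pi> ` ?B)" using card_image[OF injB] by simp
  also have "\<dots> \<le> n" using card_mono[OF s(2) img] s(3) by simp
  finally show "\<exists>s'. ereal s = ereal s' \<and> 0 \<le> s' \<and> finite {k. s' < norm (h k)} \<and> card {k. s' < norm (h k)} \<le> n"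
    using fB s(1) by blast
qed

lemma sum_app: "(\<Sum>i\<in>A. f i) x = (\<Sum>i\<in>A. f i x)"
  by (induction A rule: infinite_finite_induct) auto

lemma sum_split: "(\<Sum>i<(n::nat)+m. (z i::'a::comm_monoid_add)) = (\<Sum>i<n. z i) + (\<Sum>i<m. z (n+i))"
  by (induction m) (auto simp: add.assoc)

definition decs :: "(nat \<Rightarrow> complex) set \<Rightarrow> ((nat \<Rightarrow> complex) \<Rightarrow> real) \<Rightarrow> (nat \<Rightarrow> complex) \<Rightarrow> real set" where
  "decs E N x = {(\<Sum>i<n. N (xs i)) | n xs.
       (n::nat) \<ge> 1 \<and> (\<forall>i<n. xs i \<in> E) \<and> x = (\<Sum>i<n. xs i)}"

lemma decsI: "(n::nat) \<ge> 1 \<Longrightarrow> \<forall>i<n. xs i \<in> E \<Longrightarrow> x = (\<Sum>i<n. xs i) \<Longrightarrow> (\<Sum>i<n. N (xs i)) \<in> decs E N x"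
  unfolding decs_def by blast

lemma env_def: "envelope_norm E N x = Inf (decs E N x)"
  unfolding envelope_norm_def decs_def ..

context
  fixes E N assumes qn: "is_quasinorm E N"
begin

lemma zE: "0 \<in> E" and addE: "x\<in>E \<Longrightarrow> y\<in>E \<Longrightarrow> x+y\<in>E" and smE: "x\<in>E \<Longrightarrow> (\<lambda>k. a * x k) \<in> E"
  and Nsm: "x\<in>E \<Longrightarrow> N (\<lambda>k. a * x k) = norm a * N x"
  and Npos: "x \<in> E \<Longrightarrow> x\<noteq>0 \<Longrightarrow> N x > 0"
  using qn unfolding is_quasinorm_def complex_subspace_def by auto

lemma N0: "N 0 = 0"
proof -
  have "N (\<lambda>k. 0 * (0::nat\<Rightarrow>complex) k) = 0" using Nsm[OF zE, of 0] by simp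
  thus ?thesis by (simp add: zero_fun_def)
qed

lemma Nnn: "x \<in> E \<Longrightarrow> N x \<ge> 0"
  using Npos N0 by (cases "x = 0") (auto intro: less_imp_le)

lemma sumE: "\<forall>i<(n::nat). xs i \<in> E \<Longrightarrow> (\<Sum>i<n. xs i) \<in> E"
  by (induction n) (auto intro: zE addE)

lemma decs_nn: "t \<in> decs E N x \<Longrightarrow> t \<ge> 0"
  unfolding decs_def by (auto intro!: sum_nonneg Nnn)

lemma decs_self: "x \<in> E \<Longrightarrow> N x \<in> decs E N x"
  unfolding decs_def by (rule CollectI, rule exI[of _ 1], rule exI[of _ "\<lambda>_. x"]) auto

lemma env_le: "t \<in> decs E N x \<Longrightarrow> envelope_norm E N x \<le> t"
  unfolding env_def by (rule cInf_lower) (auto intro: bdd_belowI[of _ 0] decs_nn)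

lemma env_ge: "x \<in> E \<Longrightarrow> (\<And>t. t \<in> decs E N x \<Longrightarrow> c \<le> t) \<Longrightarrow> c \<le> envelope_norm E N x"
  unfolding env_def by (rule cInf_greatest) (use decs_self in auto)

lemma env_nn: "x \<in> E \<Longrightarrow> envelope_norm E N x \<ge> 0"
  using env_ge decs_nn by blast

lemma env_0: "envelope_norm E N 0 = 0"
proof -
  have "envelope_norm E N 0 \<le> 0" using env_le[OF decs_self[OF zE]] N0 by simp
  thus ?thesis using env_nn[OF zE] by simp
qed

lemma scale_le:
  assumes a: "a \<noteq> 0" and x: "x \<in> E"
  shows "envelope_norm E N (\<lambda>k. a * x k) \<le> norm a * envelope_norm E N x"
proof -
  have "envelope_norm E N (\<lambda>k. a * x k) / norm a \<le> envelope_norm E N x"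
  proof (rule env_ge[OF x])
    fix t assume "t \<in> decs E N x"
    then obtain n :: nat and xs where h: "n \<ge> 1" "\<forall>i<n. xs i \<in> E" "x = (\<Sum>i<n. xs i)" "t = (\<Sum>i<n. N (xs i))"
      unfolding decs_def by blast
    let ?ys = "\<lambda>i k. a * xs i k"
    have "(\<lambda>k. a * x k) = (\<Sum>i<n. ?ys i)"
      by (rule ext) (simp add: h(3) sum_app sum_distrib_left)
    moreover have "(\<Sum>i<n. N (?ys i)) = norm a * t" using h by (simp add: Nsm sum_distrib_left)
    ultimately have "norm a * t \<in> decs E N (\<lambda>k. a * x k)"
      using decsI[of n ?ys E "\<lambda>k. a * x k" N] h smE by simp
    hence "envelope_norm E N (\<lambda>k. a * x k) \<le> norm a * t" by (rule env_le)
    thus "envelope_norm E N (\<lambda>k. a * x k) / norm a \<le> t" using a by (simp add: divide_le_eq mult.commute)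
  qed
  thus ?thesis using a by (simp add: divide_le_eq mult.commute)
qed

lemma scale_eq:
  assumes x: "x \<in> E"
  shows "envelope_norm E N (\<lambda>k. a * x k) = norm a * envelope_norm E N x"
proof (cases "a = 0")
  case True
  then show ?thesis using env_0 by (simp add: zero_fun_def)
next
  case False
  have 1: "envelope_norm E N (\<lambda>k. a * x k) \<le> norm a * envelope_norm E N x" by (rule scale_le[OF False x])
  have "envelope_norm E N (\<lambda>k. (1/a) * (a * x k)) \<le> norm (1/a) * envelope_norm E N (\<lambda>k. a * x k)"
    by (rule scale_le) (use False smE[OF x] in auto)
  hence "envelope_norm E N x \<le> envelope_norm E N (\<lambda>k. a * x k) / norm a"
    using False by (simp add: norm_divide)
  hence "norm a * envelope_norm E N x \<le> envelope_norm E N (\<lambda>k. a * x k)"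
    using False by (simp add: le_divide_eq mult.commute)
  thus ?thesis using 1 by simp
qed

lemma triangle:
  assumes x: "x \<in> E" and y: "y \<in> E"
  shows "envelope_norm E N (x + y) \<le> envelope_norm E N x + envelope_norm E N y"
proof -
  have key: "envelope_norm E N (x + y) \<le> t1 + t2" if t1: "t1 \<in> decs E N x" and t2: "t2 \<in> decs E N y" for t1 t2
  proof -
    obtain n :: nat and xs where h: "n \<ge> 1" "\<forall>i<n. xs i \<in> E" "x = (\<Sum>i<n. xs i)" "t1 = (\<Sum>i<n. N (xs i))"
      using t1 unfolding decs_def by blast
    obtain m :: nat and ys where g: "m \<ge> 1" "\<forall>i<m. ys i \<in> E" "y = (\<Sum>i<m. ys i)" "t2 = (\<Sum>i<m. N (ys i))"
      using t2 unfolding decs_def by blast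
    define zs where "zs i = (if i < n then xs i else ys (i - n))" for i
    have s1: "(\<Sum>i<n+m. zs i) = x + y"
      unfolding sum_split h(3) g(3) by (simp add: zs_def)
    have s2: "(\<Sum>i<n+m. N (zs i)) = t1 + t2"
      unfolding sum_split h(4) g(4) by (simp add: zs_def)
    have "\<forall>i<n+m. zs i \<in> E" using h(2) g(2) unfolding zs_def by auto
    hence "t1 + t2 \<in> decs E N (x + y)" using decsI[of "n+m" zs E "x+y" N] s1 s2 h(1) by simp
    thus ?thesis by (rule env_le)
  qed
  have "envelope_norm E N (x + y) - t2 \<le> envelope_norm E N x" if t2: "t2 \<in> decs E N y" for t2
    by (rule env_ge[OF x]) (use key[OF _ t2] in force)
  hence "envelope_norm E N (x + y) - envelope_norm E N x \<le> envelope_norm E N y"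
    by (intro env_ge[OF y]) force
  thus ?thesis by simp
qed

lemma phi_sum:
  assumes "dual_functional E N \<phi>" "\<forall>i<(n::nat). xs i \<in> E"
  shows "\<phi> (\<Sum>i<n. xs i) = (\<Sum>i<n. \<phi> (xs i))"
proof -
  have add: "\<And>x y. x\<in>E \<Longrightarrow> y\<in>E \<Longrightarrow> \<phi> (x + y) = \<phi> x + \<phi> y"
    using assms(1) unfolding dual_functional_def by blast
  have "\<phi> 0 = \<phi> 0 + \<phi> 0" using add[OF zE zE] by simp
  hence p0: "\<phi> 0 = 0" by simp
  show ?thesis using assms(2)
    by (induction n) (auto simp: p0 add sumE)
qed

lemma env_pos:
  assumes ds: "dual_separates E N" and x: "x \<in> E" "x \<noteq> 0"
  shows "envelope_norm E N x > 0"
proof -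
  obtain \<phi> where phi: "dual_functional E N \<phi>" "\<phi> x \<noteq> 0" using ds x unfolding dual_separates_def by blast
  obtain C where C: "\<forall>y\<in>E. norm (\<phi> y) \<le> C * N y" using phi(1) unfolding dual_functional_def by blast
  have Cp: "C > 0"
  proof (rule ccontr)
    assume "\<not> C > 0"
    hence "C * N x \<le> 0" using Nnn[OF x(1)] by (simp add: mult_nonpos_nonneg)
    thus False using C x phi(2) by (metis norm_le_zero_iff order_trans)
  qed
  have "norm (\<phi> x) / C \<le> envelope_norm E N x"
  proof (rule env_ge[OF x(1)])
    fix t assume "t \<in> decs E N x"
    then obtain n :: nat and xs where h: "n \<ge> 1" "\<forall>i<n. xs i \<in> E" "x = (\<Sum>i<n. xs i)" "t = (\<Sum>i<n. N (xs i))"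
      unfolding decs_def by blast
    have "norm (\<phi> x) = norm (\<Sum>i<n. \<phi> (xs i))" using phi_sum[OF phi(1) h(2)] h(3) by simp
    also have "\<dots> \<le> (\<Sum>i<n. norm (\<phi> (xs i)))" by (rule norm_sum)
    also have "\<dots> \<le> (\<Sum>i<n. C * N (xs i))" using C h(2) by (intro sum_mono) auto
    also have "\<dots> = C * t" using h(4) by (simp add: sum_distrib_left)
    finally show "norm (\<phi> x) / C \<le> t" using Cp by (simp add: divide_le_eq mult.commute)
  qed
  moreover have "norm (\<phi> x) / C > 0" using phi(2) Cp by simp
  ultimately show ?thesis by linarith
qed

lemma env_sym:
  assumes sym: "is_symmetric E N" and c0: "\<forall>f\<in>E. f \<longlonglongrightarrow> 0"
    and g: "g \<in> E" and mu: "\<forall>n. decr_rearr f n \<le> decr_rearr g n"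
  shows "f \<in> E \<and> envelope_norm E N f \<le> envelope_norm E N g"
proof -
  have symN: "\<And>f g. g \<in> E \<Longrightarrow> (\<forall>n. decr_rearr f n \<le> decr_rearr g n) \<Longrightarrow> f \<in> E \<and> N f \<le> N g"
    using sym unfolding is_symmetric_def by blast
  have f: "f \<in> E" using symN[OF g mu] by blast
  obtain \<pi> where pi: "inj_on \<pi> {k. f k \<noteq> 0}" "\<forall>k. f k \<noteq> 0 \<longrightarrow> norm (f k) \<le> norm (g (\<pi> k))"
    using matching[OF c0[rule_format, OF f] c0[rule_format, OF g] mu] by blast
  have "envelope_norm E N f \<le> envelope_norm E N g"
  proof (rule env_ge[OF g])
    fix t assume "t \<in> decs E N g"
    then obtain n :: nat and gs where h: "n \<ge> 1" "\<forall>i<n. gs i \<in> E" "g = (\<Sum>i<n. gs i)" "t = (\<Sum>i<n. N (gs i))"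
      unfolding decs_def by blast
    define fs where "fs i = (\<lambda>k. if f k = 0 then 0 else f k / g (\<pi> k) * gs i (\<pi> k))" for i
    have fsi: "fs i \<in> E \<and> N (fs i) \<le> N (gs i)" if i: "i < n" for i
    proof (rule symN[OF h(2)[rule_format, OF i]], rule allI, rule rearr_mono[OF pi(1)], intro allI impI)
      fix k assume nz: "fs i k \<noteq> 0"
      hence fk: "f k \<noteq> 0" unfolding fs_def by auto
      have le: "norm (f k) \<le> norm (g (\<pi> k))" using pi(2) fk by blast
      hence gk: "g (\<pi> k) \<noteq> 0" using fk by auto
      have "norm (fs i k) = norm (f k) / norm (g (\<pi> k)) * norm (gs i (\<pi> k))"
        using fk unfolding fs_def by (simp add: norm_mult norm_divide)
      also have "\<dots> \<le> 1 * norm (gs i (\<pi> k))"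
        using le gk by (intro mult_right_mono) (auto simp: divide_le_eq)
      finally show "f k \<noteq> 0 \<and> norm (fs i k) \<le> norm (gs i (\<pi> k))" using fk by simp
    qed
    have fsum: "f = (\<Sum>i<n. fs i)"
    proof (rule ext)
      fix k
      show "f k = (\<Sum>i<n. fs i) k"
      proof (cases "f k = 0")
        case True
        then show ?thesis by (simp add: sum_app fs_def)
      next
        case False
        have gk: "g (\<pi> k) \<noteq> 0" using pi(2) False by fastforce
        have "(\<Sum>i<n. fs i) k = f k / g (\<pi> k) * (\<Sum>i<n. gs i (\<pi> k))"
          using False by (simp add: sum_app fs_def sum_distrib_left)
        also have "(\<Sum>i<n. gs i (\<pi> k)) = g (\<pi> k)" using h(3) by (simp add: sum_app)
        finally show ?thesis using gk by simp
      qed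
    qed
    have "(\<Sum>i<n. N (fs i)) \<in> decs E N f"
      using decsI[of n fs E f N] h(1) fsi fsum by blast
    hence "envelope_norm E N f \<le> (\<Sum>i<n. N (fs i))" by (rule env_le)
    also have "\<dots> \<le> t" using fsi h(4) by (auto intro!: sum_mono)
    finally show "envelope_norm E N f \<le> t" .
  qed
  thus ?thesis using f by blast
qed

end

theorem mainTheorem2:
  fixes E :: "(nat \<Rightarrow> complex) set" and N :: "(nat \<Rightarrow> complex) \<Rightarrow> real"
  assumes "is_quasinorm E N"
    and "is_symmetric E N"
    and "\<forall>f\<in>E. f \<longlonglongrightarrow> 0"
    and "dual_separates E N"
  shows "is_norm_on E (envelope_norm E N) \<and> is_symmetric E (envelope_norm E N)"
proof
  have cs: "complex_subspace E" using assms(1) unfolding is_quasinorm_def by blast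
  show "is_norm_on E (envelope_norm E N)"
    unfolding is_norm_on_def
  proof (intro conjI)
    show "complex_subspace E" by (rule cs)
    show "\<forall>x\<in>E. x \<noteq> 0 \<longrightarrow> 0 < envelope_norm E N x"
      using env_pos[OF assms(1) assms(4)] by blast
    show "\<forall>a. \<forall>x\<in>E. envelope_norm E N (\<lambda>k. a * x k) = cmod a * envelope_norm E N x"
      using scale_eq[OF assms(1)] by blast
    show "\<forall>x\<in>E. \<forall>y\<in>E. envelope_norm E N (x + y) \<le> envelope_norm E N x + envelope_norm E N y"
      using triangle[OF assms(1)] by blast
  qed
  show "is_symmetric E (envelope_norm E N)"
    unfolding is_symmetric_def
  proof (intro allI impI)
    fix f g assume h: "g \<in> E \<and> (\<forall>n. decr_rearr f n \<le> decr_rearr g n)"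
    show "f \<in> E \<and> envelope_norm E N f \<le> envelope_norm E N g"
      using env_sym[OF assms(1,2,3) conjunct1[OF h] conjunct2[OF h]] .
  qed
qed

end
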